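(* Let $\mathcal{T}_1,\mathcal{T}_2,\mathcal{T}_3$ be channelled transition systems and let $\|$ be the parallel composition defined below. Then (i) $\mathcal{T}_1\|\mathcal{T}_2=\mathcal{T}_2\|\mathcal{T}_1$, and (ii) $(\mathcal{T}_1\|\mathcal{T}_2)\|\mathcal{T}_3=\mathcal{T}_1\|(\mathcal{T}_2\|\mathcal{T}_3)$, where these equalities are understood up to the canonical identification of composite states (and state labels) $(s_1,s_2)$ with $(s_2,s_1)$, respectively $((s_1,s_2),s_3)$ with $(s_1,(s_2,s_3))$.
   Context: A channelled transition system (CTS) is a tuple $\mathcal{T}=\langle C,\Sigma,\Upsilon,S,S_0,R,L,\mathsf{ls}\rangle$ where $C$ is a set of channels containing a distinguished broadcast channel $\star$, $\Sigma$ is a state alphabet, $\Upsilon=\Upsilon^+\times\{!,?\}\times C$ for some set $\Upsilon^+$ (a label $(\upsilon,!,c)$ is a send and $(\upsilon,?,c)$ a receive of $\upsilon$ on channel $c$), $S$ is a set of states, $S_0\subseteq S$ the initial states, $R\subseteq S\times\Upsilon\times S$ the transition relation, $L:S\to\Sigma$ a labelling, and $\mathsf{ls}:S\to 2^C$ a listening function with $\star\in\mathsf{ls}(s)$ for all $s$. The composition of $\mathcal{T}_i=\langle C_i,\Sigma_i,\Upsilon_i,S_i,S_0^i,R_i,L_i,\mathsf{ls}^i\rangle$ ($i=1,2$) is $\mathcal{T}_1\|\mathcal{T}_2=\langle C_1\cup C_2,\Sigma_1\times\Sigma_2,\Upsilon_1\cup\Upsilon_2,S_1\times S_2,S_0^1\times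 S_0^2,R,L,\mathsf{ls}\rangle$ with $L(s_1,s_2)=(L_1(s_1),L_2(s_2))$, $\mathsf{ls}(s_1,s_2)=\mathsf{ls}^1(s_1)\cup\mathsf{ls}^2(s_2)$, and $R$ the union of the following three sets: (1) triples $((s_1,s_2),(\upsilon,!,c),(s_1',s_2'))$ such that one of: $(s_1,(\upsilon,!,c),s_1')\in R_1$ and $(s_2,(\upsilon,?,c),s_2')\in R_2$; or $(s_1,(\upsilon,?,c),s_1')\in R_1$ and $(s_2,(\upsilon,!,c),s_2')\in R_2$; or $(s_1,(\upsilon,!,c),s_1')\in R_1$, $c\notin\mathsf{ls}^2(s_2)$ and $s_2=s_2'$; or $c\notin\mathsf{ls}^1(s_1)$, $s_1=s_1'$ and $(s_2,(\upsilon,!,c),s_2')\in R_2$; (2) triples $((s_1,s_2),(\upsilon,?,c),(s_1',s_2'))$ such that one of: $(s_1,(\upsilon,?,c),s_1')\in R_1$ and $(s_2,(\upsilon,?,c),s_2')\in R_2$; or $(s_1,(\upsilon,?,c),s_1')\in R_1$, $c\notin\mathsf{ls}^2(s_2)$ and $s_2=s_2'$; or $c\notin\mathsf{ls}^1(s_1)$, $s_1=s_1'$ and $(s_2,(\upsilon,?,c),s_2')\in R_2$; (3) triples $((s_1,s_2),(\upsilon,\gamma,\star),(s_1',s_2'))$ with $\gamma\in\{!,?\}$ such that either $(s_1,(\upsilon,\gamma,\star),s_1')\in R_1$, $s_2=s_2'$ and there is no $s_2''$ with $(s_2,(\upsilon,?,\star),s_2'')\in R_2$; or $s_1=s_1'$,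 there is no $s_1''$ with $(s_1,(\upsilon,?,\star),s_1'')\in R_1$, and $(s_2,(\upsilon,\gamma,\star),s_2')\in R_2$. *)

theory Defs
  imports Main
begin

datatype dir = Snd | Rcv

(* A channelled transition system.  'c channels, 'a state alphabet,
   'u message set Upsilon^+, 's states.  The broadcast channel star :: 'c is a
   global parameter shared by all systems. *)
record ('c, 'a, 'u, 's) cts =
  chans :: "'c set"
  alph  :: "'a set"
  labs  :: "('u \<times> dir \<times> 'c) set"
  states :: "'s set"
  inits :: "'s set"
  trans :: "('s \<times> ('u \<times> dir \<times> 'c) \<times> 's) set"
  lab :: "'s \<Rightarrow> 'a"
  ls :: "'s \<Rightarrow> 'c set"

definition is_cts :: "'c \<Rightarrow> ('c, 'a, 'u, 's) cts \<Rightarrow> bool" where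
  "is_cts star T \<longleftrightarrow>
     star \<in> chans T \<and>
     (\<exists>U. labs T = U \<times> UNIV \<times> chans T) \<and>
     inits T \<subseteq> states T \<and>
     trans T \<subseteq> states T \<times> labs T \<times> states T \<and>
     (\<forall>s\<in>states T. lab T s \<in> alph T) \<and>
     (\<forall>s\<in>states T. ls T s \<subseteq> chans T \<and> star \<in> ls T s)"

definition compose_trans ::
  "'c \<Rightarrow> ('c, 'a1, 'u, 's1) cts \<Rightarrow> ('c, 'a2, 'u, 's2) cts
     \<Rightarrow> (('s1 \<times> 's2) \<times> ('u \<times> dir \<times> 'c) \<times> ('s1 \<times> 's2)) set" where
  "compose_trans star T1 T2 =
    {((s1, s2), (u, Snd, c), (s1', s2')) | s1 s2 u c s1' s2'.
        ((s1, (u, Snd, c), s1') \<in> trans T1 \<and> (s2, (u, Rcv, c), s2') \<in> trans T2)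
      \<or> ((s1, (u, Rcv, c), s1') \<in> trans T1 \<and> (s2, (u, Snd, c), s2') \<in> trans T2)
      \<or> ((s1, (u, Snd, c), s1') \<in> trans T1 \<and> c \<notin> ls T2 s2 \<and> s2 = s2')
      \<or> (c \<notin> ls T1 s1 \<and> s1 = s1' \<and> (s2, (u, Snd, c), s2') \<in> trans T2)}
    \<union>
    {((s1, s2), (u, Rcv, c), (s1', s2')) | s1 s2 u c s1' s2'.
        ((s1, (u, Rcv, c), s1') \<in> trans T1 \<and> (s2, (u, Rcv, c), s2') \<in> trans T2)
      \<or> ((s1, (u, Rcv, c), s1') \<in> trans T1 \<and> c \<notin> ls T2 s2 \<and> s2 = s2')
      \<or> (c \<notin> ls T1 s1 \<and> s1 = s1' \<and> (s2, (u, Rcv, c), s2') \<in> trans T2)}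
    \<union>
    {((s1, s2), (u, g, star), (s1', s2')) | s1 s2 u g s1' s2'.
        ((s1, (u, g, star), s1') \<in> trans T1 \<and> s2 = s2'
           \<and> \<not> (\<exists>s2''. (s2, (u, Rcv, star), s2'') \<in> trans T2))
      \<or> (s1 = s1' \<and> \<not> (\<exists>s1''. (s1, (u, Rcv, star), s1'') \<in> trans T1)
           \<and> (s2, (u, g, star), s2') \<in> trans T2)}"

definition compose ::
  "'c \<Rightarrow> ('c, 'a1, 'u, 's1) cts \<Rightarrow> ('c, 'a2, 'u, 's2) cts
     \<Rightarrow> ('c, 'a1 \<times> 'a2, 'u, 's1 \<times> 's2) cts" where
  "compose star T1 T2 =
    \<lparr> chans = chans T1 \<union> chans T2,
      alph = alph T1 \<times> alph T2,
      labs = labs T1 \<union> labs T2,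
      states = states T1 \<times> states T2,
      inits = inits T1 \<times> inits T2,
      trans = compose_trans star T1 T2,
      lab = (\<lambda>(s1, s2). (lab T1 s1, lab T2 s2)),
      ls = (\<lambda>(s1, s2). ls T1 s1 \<union> ls T2 s2) \<rparr>"

definition cts_iso ::
  "('s \<Rightarrow> 't) \<Rightarrow> ('a \<Rightarrow> 'b) \<Rightarrow> ('c, 'a, 'u, 's) cts \<Rightarrow> ('c, 'b, 'u, 't) cts \<Rightarrow> bool" where
  "cts_iso f g T T' \<longleftrightarrow>
     chans T' = chans T \<and>
     alph T' = g ` alph T \<and>
     labs T' = labs T \<and>
     states T' = f ` states T \<and>
     inits T' = f ` inits T \<and>
     trans T' = (\<lambda>(s, l, s'). (f s, l, f s')) ` trans T \<and>
     (\<forall>s\<in>states T. lab T' (f s) = g (lab T s) \<and> ls T' (f s) = ls T s)"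

definition assoc_r :: "('x \<times> 'y) \<times> 'z \<Rightarrow> 'x \<times> ('y \<times> 'z)" where
  "assoc_r = (\<lambda>((a, b), c). (a, (b, c)))"

end

theory Submission
  imports Defs
begin

definition canrec where "canrec star T s u \<longleftrightarrow> (\<exists>s'. (s,(u,Rcv,star),s') \<in> trans T)"

lemma mem: "(((s1,s2),(u,d,c),(t1,t2)) \<in> compose_trans star T1 T2) \<longleftrightarrow>
  (d = Snd \<and> (((s1, (u, Snd, c), t1) \<in> trans T1 \<and> (s2, (u, Rcv, c), t2) \<in> trans T2)
      \<or> ((s1, (u, Rcv, c), t1) \<in> trans T1 \<and> (s2, (u, Snd, c), t2) \<in> trans T2)
      \<or> ((s1, (u, Snd, c), t1) \<in> trans T1 \<and> c \<notin> ls T2 s2 \<and> s2 = t2)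
      \<or> (c \<notin> ls T1 s1 \<and> s1 = t1 \<and> (s2, (u, Snd, c), t2) \<in> trans T2)))
  \<or> (d = Rcv \<and> (((s1, (u, Rcv, c), t1) \<in> trans T1 \<and> (s2, (u, Rcv, c), t2) \<in> trans T2)
      \<or> ((s1, (u, Rcv, c), t1) \<in> trans T1 \<and> c \<notin> ls T2 s2 \<and> s2 = t2)
      \<or> (c \<notin> ls T1 s1 \<and> s1 = t1 \<and> (s2, (u, Rcv, c), t2) \<in> trans T2)))
  \<or> (c = star \<and> (((s1, (u, d, star), t1) \<in> trans T1 \<and> s2 = t2 \<and> \<not> canrec star T2 s2 u)
      \<or> (s1 = t1 \<and> \<not> canrec star T1 s1 u \<and> (s2, (u, d, star), t2) \<in> trans T2)))"
  unfolding compose_trans_def canrec_def by auto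

lemma trans_c: "trans (compose star T1 T2) = compose_trans star T1 T2"
  and ls_c: "ls (compose star T1 T2) (s1,s2) = ls T1 s1 \<union> ls T2 s2"
  by (simp_all add: compose_def)

lemma canrec_c: "canrec star (compose star T1 T2) (s1,s2) u \<longleftrightarrow> canrec star T1 s1 u \<or> canrec star T2 s2 u"
proof
  assume "canrec star (compose star T1 T2) (s1,s2) u"
  then obtain t1 t2 where "((s1,s2),(u,Rcv,star),(t1,t2)) \<in> compose_trans star T1 T2"
    by (auto simp: canrec_def trans_c)
  then show "canrec star T1 s1 u \<or> canrec star T2 s2 u" unfolding mem by (auto simp: canrec_def)
next
  assume a: "canrec star T1 s1 u \<or> canrec star T2 s2 u"
  show "canrec star (compose star T1 T2) (s1,s2) u"
  proof (cases "canrec star T1 s1 u \<and> canrec star T2 s2 u")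
    case True
    then obtain t1 t2 where "(s1,(u,Rcv,star),t1) \<in> trans T1" "(s2,(u,Rcv,star),t2) \<in> trans T2"
      by (auto simp: canrec_def)
    then have "((s1,s2),(u,Rcv,star),(t1,t2)) \<in> compose_trans star T1 T2" unfolding mem by auto
    then show ?thesis by (auto simp: canrec_def trans_c)
  next
    case False
    then show ?thesis
    proof (cases "canrec star T1 s1 u")
      case True
      then obtain t1 where "(s1,(u,Rcv,star),t1) \<in> trans T1" by (auto simp: canrec_def)
      then have "((s1,s2),(u,Rcv,star),(t1,s2)) \<in> compose_trans star T1 T2" unfolding mem using False True by auto
      then show ?thesis by (auto simp: canrec_def trans_c)
    next
      case f2: False
      with a obtain t2 where "(s2,(u,Rcv,star),t2) \<in> trans T2" by (auto simp: canrec_def)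
      then have "((s1,s2),(u,Rcv,star),(s1,t2)) \<in> compose_trans star T1 T2" unfolding mem using f2 by auto
      then show ?thesis by (auto simp: canrec_def trans_c)
    qed
  qed
qed

lemma canrec_ls: "is_cts star T \<Longrightarrow> canrec star T s u \<Longrightarrow> star \<in> ls T s"
  unfolding canrec_def is_cts_def by blast
lemma trans_ls: "is_cts star T \<Longrightarrow> (s,l,t) \<in> trans T \<Longrightarrow> star \<in> ls T s"
  unfolding is_cts_def by blast
lemma canrecI: "(s,(u,Rcv,star),t) \<in> trans T \<Longrightarrow> canrec star T s u"
  unfolding canrec_def by blast
lemma assoc_mem_SndS: assumes c1: "is_cts star T1" and c2: "is_cts star T2" and c3: "is_cts star T3" shows "((((s1,s2),s3),(u,Snd,star),((t1,t2),t3)) \<in> compose_trans star (compose star T1 T2) T3)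
  \<longleftrightarrow> (((s1,(s2,s3)),(u,Snd,star),(t1,(t2,t3))) \<in> compose_trans star T1 (compose star T2 T3))" 
  using canrec_ls[OF c1, of s1 u] canrec_ls[OF c2, of s2 u] canrec_ls[OF c3, of s3 u]
    trans_ls[OF c1, of s1 _ t1] trans_ls[OF c2, of s2 _ t2] trans_ls[OF c3, of s3 _ t3]
    canrecI[of s1 u star t1 T1] canrecI[of s2 u star t2 T2] canrecI[of s3 u star t3 T3]
  unfolding mem trans_c ls_c canrec_c
  by (simp only: dir.distinct simp_thms Un_iff prod.inject de_Morgan_disj; argo)
lemma assoc_mem_SndN: "((((s1,s2),s3),(u,Snd,c),((t1,t2),t3)) \<in> compose_trans star (compose star T1 T2) T3)
  \<longleftrightarrow> (((s1,(s2,s3)),(u,Snd,c),(t1,(t2,t3))) \<in> compose_trans star T1 (compose star T2 T3))" if "c \<noteq> star"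
  using that unfolding mem trans_c ls_c canrec_c
  by (simp only: dir.distinct simp_thms Un_iff prod.inject de_Morgan_disj; argo)
lemma assoc_mem_RcvS: assumes c1: "is_cts star T1" and c2: "is_cts star T2" and c3: "is_cts star T3" shows "((((s1,s2),s3),(u,Rcv,star),((t1,t2),t3)) \<in> compose_trans star (compose star T1 T2) T3)
  \<longleftrightarrow> (((s1,(s2,s3)),(u,Rcv,star),(t1,(t2,t3))) \<in> compose_trans star T1 (compose star T2 T3))" 
  using canrec_ls[OF c1, of s1 u] canrec_ls[OF c2, of s2 u] canrec_ls[OF c3, of s3 u]
    trans_ls[OF c1, of s1 _ t1] trans_ls[OF c2, of s2 _ t2] trans_ls[OF c3, of s3 _ t3]
    canrecI[of s1 u star t1 T1] canrecI[of s2 u star t2 T2] canrecI[of s3 u star t3 T3]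
  unfolding mem trans_c ls_c canrec_c
  by (simp only: dir.distinct simp_thms Un_iff prod.inject de_Morgan_disj; argo)
lemma assoc_mem_RcvN: "((((s1,s2),s3),(u,Rcv,c),((t1,t2),t3)) \<in> compose_trans star (compose star T1 T2) T3)
  \<longleftrightarrow> (((s1,(s2,s3)),(u,Rcv,c),(t1,(t2,t3))) \<in> compose_trans star T1 (compose star T2 T3))" if "c \<noteq> star"
  using that unfolding mem trans_c ls_c canrec_c
  by (simp only: dir.distinct simp_thms Un_iff prod.inject de_Morgan_disj; argo)

lemma assoc_mem: assumes "is_cts star T1" "is_cts star T2" "is_cts star T3"
  shows "((((s1,s2),s3),(u,d,c),((t1,t2),t3)) \<in> compose_trans star (compose star T1 T2) T3)
  \<longleftrightarrow> (((s1,(s2,s3)),(u,d,c),(t1,(t2,t3))) \<in> compose_trans star T1 (compose star T2 T3))"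
proof (cases d)
  case Snd
  show ?thesis
  proof (cases "c = star")
    case True show ?thesis unfolding Snd True by (rule assoc_mem_SndS[OF assms])
  next
    case False show ?thesis unfolding Snd by (rule assoc_mem_SndN[OF False])
  qed
next
  case Rcv
  show ?thesis
  proof (cases "c = star")
    case True show ?thesis unfolding Rcv True by (rule assoc_mem_RcvS[OF assms])
  next
    case False show ?thesis unfolding Rcv by (rule assoc_mem_RcvN[OF False])
  qed
qed

lemma swap_mem: "(((s1,s2),(u,d,c),(t1,t2)) \<in> compose_trans star T1 T2)
  \<longleftrightarrow> (((s2,s1),(u,d,c),(t2,t1)) \<in> compose_trans star T2 T1)"
  unfolding mem by (cases d; simp only: dir.distinct simp_thms Un_iff prod.inject de_Morgan_disj; argo)
lemma swap_trans: "(\<lambda>(s, l, s'). (prod.swap s, l, prod.swap s')) ` compose_trans star T1 T2 = compose_trans star T2 T1"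
proof (rule set_eqI, rule iffI)
  fix x assume "x \<in> (\<lambda>(s, l, s'). (prod.swap s, l, prod.swap s')) ` compose_trans star T1 T2"
  then obtain s1 s2 u d c t1 t2 where "((s1,s2),(u,d,c),(t1,t2)) \<in> compose_trans star T1 T2"
     and "x = ((s2,s1),(u,d,c),(t2,t1))" by auto
  then show "x \<in> compose_trans star T2 T1" using swap_mem by metis
next
  fix x assume "x \<in> compose_trans star T2 T1"
  moreover obtain s1 s2 u d c t1 t2 where x: "x = ((s2,s1),(u,d,c),(t2,t1))" by (metis prod.exhaust)
  ultimately have "((s1,s2),(u,d,c),(t1,t2)) \<in> compose_trans star T1 T2" using swap_mem by metis
  then show "x \<in> (\<lambda>(s, l, s'). (prod.swap s, l, prod.swap s')) ` compose_trans star T1 T2"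
    unfolding x by (rule rev_image_eqI) auto
qed

lemma assoc_trans: assumes "is_cts star T1" "is_cts star T2" "is_cts star T3" shows "(\<lambda>(s, l, s'). (assoc_r s, l, assoc_r s')) ` compose_trans star (compose star T1 T2) T3
   = compose_trans star T1 (compose star T2 T3)"
proof (rule set_eqI, rule iffI)
  fix x assume "x \<in> (\<lambda>(s, l, s'). (assoc_r s, l, assoc_r s')) ` compose_trans star (compose star T1 T2) T3"
  then obtain s1 s2 s3 u d c t1 t2 t3 where "((((s1,s2),s3),(u,d,c),((t1,t2),t3))) \<in> compose_trans star (compose star T1 T2) T3"
     and "x = ((s1,(s2,s3)),(u,d,c),(t1,(t2,t3)))" by (auto simp: assoc_r_def)
  then show "x \<in> compose_trans star T1 (compose star T2 T3)" using assoc_mem[OF assms] by metis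
next
  fix x assume "x \<in> compose_trans star T1 (compose star T2 T3)"
  moreover obtain s1 s2 s3 u d c t1 t2 t3 where x: "x = ((s1,(s2,s3)),(u,d,c),(t1,(t2,t3)))" by (metis prod.exhaust)
  ultimately have "((((s1,s2),s3),(u,d,c),((t1,t2),t3))) \<in> compose_trans star (compose star T1 T2) T3" using assoc_mem[OF assms] by metis
  then show "x \<in> (\<lambda>(s, l, s'). (assoc_r s, l, assoc_r s')) ` compose_trans star (compose star T1 T2) T3"
    unfolding x by (rule rev_image_eqI) (auto simp: assoc_r_def)
qed

lemma assoc_img: "assoc_r ` ((A \<times> B) \<times> C) = A \<times> (B \<times> C)"
  by (force simp: assoc_r_def image_iff)

theorem mainTheorem1:
  fixes star :: 'c
    and T1 :: "('c, 'a1, 'u, 's1) cts"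
    and T2 :: "('c, 'a2, 'u, 's2) cts"
    and T3 :: "('c, 'a3, 'u, 's3) cts"
  assumes "is_cts star T1" and "is_cts star T2" and "is_cts star T3"
  shows "cts_iso prod.swap prod.swap (compose star T1 T2) (compose star T2 T1)
       \<and> cts_iso assoc_r assoc_r (compose star (compose star T1 T2) T3)
                                  (compose star T1 (compose star T2 T3))"
proof
  show "cts_iso prod.swap prod.swap (compose star T1 T2) (compose star T2 T1)"
    unfolding cts_iso_def
  proof (intro conjI ballI)
    show "trans (compose star T2 T1) = (\<lambda>(s, l, s'). (prod.swap s, l, prod.swap s')) ` trans (compose star T1 T2)"
      unfolding trans_c by (rule swap_trans[symmetric])
  qed (auto simp: compose_def product_swap)
next
  show "cts_iso assoc_r assoc_r (compose star (compose star T1 T2) T3) (compose star T1 (compose star T2 T3))"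
    unfolding cts_iso_def
  proof (intro conjI ballI)
    show "trans (compose star T1 (compose star T2 T3)) = (\<lambda>(s, l, s'). (assoc_r s, l, assoc_r s')) ` trans (compose star (compose star T1 T2) T3)"
      unfolding trans_c by (rule assoc_trans[OF assms, symmetric])
  qed (simp_all add: compose_def assoc_img, auto simp: assoc_r_def)
qed

end
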